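(* Let $q$ be a prime power, $t\ge1$, $s<t$ a nonnegative integer, $\{u_1,\dots,u_t\}$ an $\mathbb{F}_q$-basis of $\mathbb{F}_{q^t}$, $W$ an arbitrary $\mathbb{F}_q$-subspace of $\mathbb{F}_{q^t}$ of dimension $s$, and $\alpha^*\in\mathbb{F}_{q^t}$. Let $L_W(x)=\prod_{w\in W}(x-w)$ and $g_i(x)=L_W\big(u_i(x-\alpha^* )\big)/(x-\alpha^* )$ for $i=1,\dots,t$ (a polynomial, since $L_W(0)=0$). Then $\{g_1(\alpha^* ),\dots,g_t(\alpha^* )\}$ has rank $t$ over $\mathbb{F}_q$. *)

theory Defs
  imports "HOL-Computational_Algebra.Polynomial" "HOL-Number_Theory.Prime_Powers"
begin

text \<open>A subfield F of the field 'k (plays the role of F_q inside F_{q^t}).\<close>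
definition is_subfield :: "'k::field set \<Rightarrow> bool" where
  "is_subfield F \<longleftrightarrow> 0 \<in> F \<and> 1 \<in> F \<and>
     (\<forall>a\<in>F. \<forall>b\<in>F. a + b \<in> F \<and> a * b \<in> F) \<and>
     (\<forall>a\<in>F. - a \<in> F) \<and> (\<forall>a\<in>F. a \<noteq> 0 \<longrightarrow> inverse a \<in> F)"

definition lin_indep_fam :: "'k::field set \<Rightarrow> 'i set \<Rightarrow> ('i \<Rightarrow> 'k) \<Rightarrow> bool" where
  "lin_indep_fam F I v \<longleftrightarrow> finite I \<and>
     (\<forall>c. (\<forall>i\<in>I. c i \<in> F) \<longrightarrow> (\<Sum>i\<in>I. c i * v i) = 0 \<longrightarrow> (\<forall>i\<in>I. c i = 0))"

definition span_fam :: "'k::field set \<Rightarrow> 'i set \<Rightarrow> ('i \<Rightarrow> 'k) \<Rightarrow> 'k set" where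
  "span_fam F I v = {\<Sum>i\<in>I. c i * v i | c. \<forall>i\<in>I. c i \<in> F}"

definition lin_indep_set :: "'k::field set \<Rightarrow> 'k set \<Rightarrow> bool" where
  "lin_indep_set F B \<longleftrightarrow> lin_indep_fam F B id"

definition is_subspace :: "'k::field set \<Rightarrow> 'k set \<Rightarrow> bool" where
  "is_subspace F W \<longleftrightarrow> 0 \<in> W \<and> (\<forall>x\<in>W. \<forall>y\<in>W. x + y \<in> W) \<and>
     (\<forall>a\<in>F. \<forall>x\<in>W. a * x \<in> W)"

definition has_dim :: "'k::field set \<Rightarrow> 'k set \<Rightarrow> nat \<Rightarrow> bool" where
  "has_dim F W d \<longleftrightarrow> (\<exists>B. B \<subseteq> W \<and> finite B \<and> card B = d \<and>
      lin_indep_set F B \<and> span_fam F B id = W)"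

definition is_basis_fam :: "'k::field set \<Rightarrow> nat \<Rightarrow> (nat \<Rightarrow> 'k) \<Rightarrow> bool" where
  "is_basis_fam F t u \<longleftrightarrow> lin_indep_fam F {1..t} u \<and> span_fam F {1..t} u = UNIV"

definition rank_over :: "'k::field set \<Rightarrow> 'k set \<Rightarrow> nat" where
  "rank_over F S = Max {card B | B. B \<subseteq> S \<and> lin_indep_set F B}"

definition subspace_poly :: "'k::field set \<Rightarrow> 'k poly" where
  "subspace_poly W = (\<Prod>w\<in>W. [:- w, 1:])"

definition g_poly :: "'k::field set \<Rightarrow> 'k \<Rightarrow> 'k \<Rightarrow> 'k poly" where
  "g_poly W ui \<alpha> = pcompose (subspace_poly W) [:- (ui * \<alpha>), ui:] div [:- \<alpha>, 1:]"

end

theory Submission imports Defs begin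
lemma gval:
  fixes W :: "'k::field set"
  assumes fin: "finite W" and z: "0 \<in> W"
  shows "poly (g_poly W ui \<alpha>) \<alpha> = ui * (\<Prod>w\<in>W-{0}. - w)"
proof -
  define P where "P = (\<Prod>w\<in>W-{0}. [:-w,1:])"
  have L: "subspace_poly W = [:0,1:] * P"
    unfolding subspace_poly_def P_def using prod.remove[OF fin z, of "\<lambda>w. [:-w,1:]"] by simp
  have r: "[:-(ui*\<alpha>), ui:] = smult ui [:-\<alpha>,1:]" by simp
  have c: "pcompose (subspace_poly W) [:-(ui*\<alpha>), ui:]
      = [:-\<alpha>,1:] * smult ui (pcompose P [:-(ui*\<alpha>), ui:])"
  proof -
    have "pcompose [:0,1:] [:-(ui*\<alpha>), ui:] = [:-(ui*\<alpha>), ui:]"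
      by (simp add: pcompose_pCons)
    thus ?thesis unfolding L pcompose_mult by (metis r mult_smult_left mult_smult_right)
  qed
  have d: "g_poly W ui \<alpha> = smult ui (pcompose P [:-(ui*\<alpha>), ui:])"
    unfolding g_poly_def c by (rule nonzero_mult_div_cancel_left) simp
  have "poly [:-(ui*\<alpha>), ui:] \<alpha> = 0" by (simp add: mult.commute)
  thus ?thesis unfolding d P_def poly_smult poly_pcompose poly_prod by simp
qed
theorem lemma7:
  fixes F :: "'k::{field,finite} set"
    and q t s :: nat
    and u :: "nat \<Rightarrow> 'k"
    and W :: "'k set"
    and \<alpha> :: 'k
  assumes "primepow q"
    and "is_subfield F" and "card F = q" and "card (UNIV :: 'k set) = q ^ t"
    and "t \<ge> 1" and "s < t"
    and "is_basis_fam F t u"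
    and "is_subspace F W" and "has_dim F W s"
  shows "rank_over F ((\<lambda>i. poly (g_poly W (u i) \<alpha>) \<alpha>) ` {1..t}) = t"
proof -
  define c where "c = (\<Prod>w\<in>W-{0}. - w)"
  have z: "0 \<in> W" using assms(8) unfolding is_subspace_def by auto
  have cnz: "c \<noteq> 0" unfolding c_def by simp
  have S: "(\<lambda>i. poly (g_poly W (u i) \<alpha>) \<alpha>) ` {1..t} = (\<lambda>i. c * u i) ` {1..t}"
    using gval[OF _ z] c_def by (simp add: mult.commute)
  have ind: "lin_indep_fam F {1..t} u" using assms(7) unfolding is_basis_fam_def by simp
  have sf: "0 \<in> F" "1 \<in> F" "\<And>a. a \<in> F \<Longrightarrow> - a \<in> F"
    using assms(2) unfolding is_subfield_def by auto
  have inj: "inj_on u {1..t}"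
  proof (rule inj_onI, rule ccontr)
    fix i j assume ij: "i \<in> {1..t}" "j \<in> {1..t}" "u i = u j" "i \<noteq> j"
    define cc where "cc k = (if k = i then 1 else if k = j then -1 else (0::'k))" for k
    have e: "\<And>k. cc k * u k = (if k = i then u i else 0) - (if k = j then u j else 0)"
      using ij unfolding cc_def by auto
    have "(\<Sum>k\<in>{1..t}. cc k * u k) = 0"
      unfolding e sum_subtractf using ij by simp
    moreover have "\<forall>k\<in>{1..t}. cc k \<in> F" using sf unfolding cc_def by auto
    ultimately have "cc i = 0" using ind ij unfolding lin_indep_fam_def by blast
    thus False unfolding cc_def by simp
  qed
  define S' where "S' = (\<lambda>i. c * u i) ` {1..t}"
  have inj2: "inj_on (\<lambda>i. c * u i) {1..t}"
  proof (rule inj_onI)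
    fix i j assume "i \<in> {1..t}" "j \<in> {1..t}" "c * u i = c * u j"
    thus "i = j" using inj cnz by (metis inj_onD mult_left_cancel)
  qed
  have cardS: "card S' = t" unfolding S'_def using card_image[OF inj2] by simp
  have indS: "lin_indep_set F S'"
    unfolding lin_indep_set_def lin_indep_fam_def
  proof (intro conjI allI impI ballI)
    show "finite S'" by simp
    fix d x assume dF: "\<forall>x\<in>S'. d x \<in> F" and sm: "(\<Sum>x\<in>S'. d x * id x) = 0" and x: "x \<in> S'"
    have "(\<Sum>i\<in>{1..t}. d (c * u i) * (c * u i)) = 0"
      using sm unfolding S'_def sum.reindex[OF inj2] o_def id_def .
    hence "c * (\<Sum>i\<in>{1..t}. d (c * u i) * u i) = 0"
      by (simp add: sum_distrib_left ac_simps)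
    hence "(\<Sum>i\<in>{1..t}. d (c * u i) * u i) = 0" using cnz by simp
    moreover have "\<forall>i\<in>{1..t}. d (c * u i) \<in> F" using dF unfolding S'_def by auto
    ultimately have "\<forall>i\<in>{1..t}. d (c * u i) = 0"
      using ind[unfolded lin_indep_fam_def, THEN conjunct2, rule_format, of "\<lambda>i. d (c * u i)"] by blast
    thus "d x = 0" using x unfolding S'_def by auto
  qed
  have "Max {card B | B. B \<subseteq> S' \<and> lin_indep_set F B} = t"
  proof (rule Max_eqI)
    show "finite {card B | B. B \<subseteq> S' \<and> lin_indep_set F B}"
      by (rule finite_subset[of _ "{..t}"]) (auto simp: cardS[symmetric] intro: card_mono)
    show "\<And>y. y \<in> {card B | B. B \<subseteq> S' \<and> lin_indep_set F B} \<Longrightarrow> y \<le> t"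
      using cardS by (auto intro: card_mono)
    show "t \<in> {card B | B. B \<subseteq> S' \<and> lin_indep_set F B}" using cardS indS by auto
  qed
  thus ?thesis unfolding rank_over_def S S'_def .
qed

end
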